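(* Let $t$ be a positive integer and let $G$ be a finite group (not necessarily abelian, written additively) such that the smallest prime divisor $p$ of $|G|$ satisfies $p>t(2t+1)$. Let $M=[a_1^{\lambda_1},a_2^{\lambda_2}]$ be a multiset of non-identity elements of $G$ with $\lambda_1\ge 2t$. Then there exists a realization $W=(w_0,\dots,w_{\lambda_1+\lambda_2})$ of $M$ such that (a) $w_i=w_{i-1}+a_1$ for all $i\in\{1,\dots,t\}$; (b) $w_i=w_{i-1}+a_1$ for all $i\in\{\lambda_1+\lambda_2-(t-1),\dots,\lambda_1+\lambda_2\}$; (c) $w_i\ne w_j$ whenever $1\le|i-j|\le t$.
   Context: $[a_1^{\lambda_1},a_2^{\lambda_2}]$ denotes the multiset containing $a_1$ with multiplicity $\lambda_1$ and $a_2$ with multiplicity $\lambda_2$. For a multiset $M$, $\pm M$ denotes the multiset $[x,-x : x\in M]$ (each element of $M$ contributes both $x$ and $-x$, with multiplicity). A walk $W=(w_0,\dots,w_\ell)$ in $G$ has differences $\delta_i$ defined by $w_i=w_{i-1}+\delta_i$ ($1\le i\le\ell$), and $\Delta(W)=\pm[\delta_1,\dots,\delta_\ell]$. A realization of $M$ is a walk $W$ (in the Cayley graph $Cay[G:\pm M]$, vertices may repeat) with $\Delta(W)=\pm M$; equivalently, there is an ordering $(x_1,\dots,x_\ell)$ of $M$ and signs $\varepsilon_i\in\{\pm1\}$ with $w_i=w_{i-1}+\varepsilon_i x_i$. *)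

theory Defs
  imports "HOL-Algebra.Algebra" "HOL-Library.Multiset" "HOL-Computational_Algebra.Primes"
begin

text \<open>The sign True stands for +1, False for -1.\<close>
definition realization :: "('a, 'b) monoid_scheme \<Rightarrow> 'a multiset \<Rightarrow> (nat \<Rightarrow> 'a) \<Rightarrow> bool" where
  "realization G M w \<longleftrightarrow> w 0 \<in> carrier G \<and>
     (\<exists>(x :: nat \<Rightarrow> 'a) (\<epsilon> :: nat \<Rightarrow> bool).
        mset (map x [1..<size M + 1]) = M \<and>
        (\<forall>i\<in>{1..size M}. w i = w (i - 1) \<otimes>\<^bsub>G\<^esub> (if \<epsilon> i then x i else inv\<^bsub>G\<^esub> (x i))))"

end

theory Submission
  imports Defs
begin

lemma replicate_mset_plus_aux: "replicate_mset (m + n) x = replicate_mset m x + replicate_mset n x"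
  by (induct m) auto

lemma (in group) pow_ne_one_aux:
  assumes x: "x \<in> carrier G" "x \<noteq> \<one>"
    and pr: "\<forall>p::nat. Factorial_Ring.prime p \<and> p dvd order G \<longrightarrow> p > N"
    and n: "1 \<le> n" "n \<le> N"
  shows "x [^] n \<noteq> \<one>"
proof
  assume h: "x [^] n = \<one>"
  have d1: "ord x dvd n" using h pow_eq_id x by simp
  have d2: "ord x dvd order G" using ord_dvd_group_order x by simp
  have "ord x \<noteq> 1" using ord_eq_1 x by simp
  then obtain q where q: "Factorial_Ring.prime q" "q dvd ord x" using prime_factor_nat by blast
  have "q dvd order G" using q d2 dvd_trans by blast
  hence "q > N" using pr q by blast
  moreover have "q \<le> n" using q(2) d1 n dvd_trans[OF q(2) d1] dvd_imp_le by simp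
  ultimately show False using n by simp
qed

lemma (in group) swap_one:
  assumes "x \<in> carrier G" "y \<in> carrier G" "x \<otimes> y = \<one>"
  shows "y \<otimes> x = \<one>"
proof -
  have "inv y = x" using inv_equality assms by blast
  thus ?thesis using assms r_inv by metis
qed

lemma (in group) not_both_bad:
  assumes a1: "a1 \<in> carrier G" "a1 \<noteq> \<one>" and a2: "a2 \<in> carrier G"
    and pr: "\<forall>p::nat. Factorial_Ring.prime p \<and> p dvd order G \<longrightarrow> p > t * (2 * t + 1)"
    and h1: "a2 [^] m \<otimes> a1 [^] K = \<one>" "1 \<le> m" "1 \<le> K" "m + K \<le> t"
    and h2: "inv a2 [^] m' \<otimes> a1 [^] K' = \<one>" "1 \<le> m'" "1 \<le> K'" "m' + K' \<le> t"
  shows False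
proof -
  have e1: "inv (a1 [^] K) = a2 [^] m" using inv_equality h1(1) a1 a2 by simp
  have "inv (a1 [^] K') = inv a2 [^] m'" using inv_equality h2(1) a1 a2 by simp
  hence e2: "a1 [^] K' = a2 [^] m'" using a1 a2 nat_pow_inv by (metis inv_inv nat_pow_closed)
  have "a2 [^] (m * m') = inv (a1 [^] (K * m'))"
    using e1 a1 a2 by (metis nat_pow_pow nat_pow_inv nat_pow_closed)
  moreover have "a2 [^] (m' * m) = a1 [^] (K' * m)"
    using e2 a1 a2 by (metis nat_pow_pow)
  ultimately have "a1 [^] (K' * m) = inv (a1 [^] (K * m'))" by (simp add: mult.commute)
  hence "a1 [^] (K' * m) \<otimes> a1 [^] (K * m') = \<one>" using a1 by simp
  hence z: "a1 [^] (K' * m + K * m') = \<one>" using a1 nat_pow_mult by simp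
  have "K' * m \<le> t * t" using h1 h2 by (intro mult_le_mono) auto
  moreover have "K * m' \<le> t * t" using h1 h2 by (intro mult_le_mono) auto
  moreover have "1 \<le> K' * m" using h1 h2 by simp
  moreover have "t * (2 * t + 1) = t * t + t * t + t" by (simp add: algebra_simps)
  ultimately have "1 \<le> K' * m + K * m'" "K' * m + K * m' \<le> t * (2 * t + 1)"
    by linarith+
  thus False using pow_ne_one_aux[OF a1 pr] z by blast
qed

lemma (in group) main_aux:
  fixes t l1 l2 :: nat
  assumes "finite (carrier G)"
    and "t \<ge> 1"
    and "\<forall>p::nat. Factorial_Ring.prime p \<and> p dvd order G \<longrightarrow> p > t * (2 * t + 1)"
    and "a1 \<in> carrier G" and "a2 \<in> carrier G"
    and "a1 \<noteq> \<one>" and "a2 \<noteq> \<one>"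
    and "l1 \<ge> 2 * t"
  shows "\<exists>w. realization G (replicate_mset l1 a1 + replicate_mset l2 a2) w \<and>
           (\<forall>i\<in>{1..t}. w i = w (i - 1) \<otimes> a1) \<and>
           (\<forall>i\<in>{l1 + l2 - (t - 1)..l1 + l2}. w i = w (i - 1) \<otimes> a1) \<and>
           (\<forall>i\<in>{0..l1 + l2}. \<forall>j\<in>{0..l1 + l2}.
              1 \<le> \<bar>int i - int j\<bar> \<and> \<bar>int i - int j\<bar> \<le> int t \<longrightarrow> w i \<noteq> w j)"
proof -
  note a1 = assms(4,6) and a2 = assms(5,7) and pr = assms(3)
  have nopow: "x [^] n \<noteq> \<one>" if "x \<in> carrier G" "x \<noteq> \<one>" "1 \<le> n" "n \<le> t" for x n
  proof -
    have "t \<le> t * (2 * t + 1)" by simp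
    hence "n \<le> t * (2 * t + 1)" using that(4) by linarith
    thus ?thesis using pow_ne_one_aux[OF that(1,2) pr that(3)] by blast
  qed
  define bad where "bad B \<longleftrightarrow> (\<exists>m K. 1 \<le> m \<and> 1 \<le> K \<and> m + K \<le> t \<and> B [^] m \<otimes> a1 [^] K = \<one>)" for B
  have "\<not> (bad a2 \<and> bad (inv a2))"
    unfolding bad_def using not_both_bad[OF a1 a2(1) pr] by blast
  then obtain sg where sg: "\<not> bad (if sg then a2 else inv a2)" by (metis (full_types))
  define B where "B = (if sg then a2 else inv a2)"
  have B: "B \<in> carrier G" "B \<noteq> \<one>" using a2 unfolding B_def by auto
  have good: "B [^] m \<otimes> a1 [^] K \<noteq> \<one>" if "1 \<le> m + K" "m + K \<le> t" for m K
  proof (cases "m = 0")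
    case True
    thus ?thesis using nopow[OF a1, of K] that a1 by simp
  next
    case m: False
    show ?thesis
    proof (cases "K = 0")
      case True
      thus ?thesis using nopow[OF B, of m] that B by simp
    next
      case False
      thus ?thesis using sg m that unfolding bad_def B_def[symmetric] by force
    qed
  qed
  define w where "w k = a1 [^] (min k t) \<otimes> B [^] (min (k - t) l2) \<otimes> a1 [^] (k - t - l2)" for k
  have wc: "w k \<in> carrier G" for k unfolding w_def using a1 B by simp
  have decomp: "w j = w i \<otimes> (a1 [^] (min j t - min i t) \<otimes> B [^] (min (j - t) l2 - min (i - t) l2)
       \<otimes> a1 [^] (j - t - l2 - (i - t - l2)))" if "i \<le> j" for i j
  proof -
    define p where "p = min i t"
    define q where "q = min (i - t) l2"
    define r where "r = i - t - l2"
    define dA where "dA = min j t - min i t"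
    define dB where "dB = min (j - t) l2 - min (i - t) l2"
    define dC where "dC = j - t - l2 - (i - t - l2)"
    have wi: "w i = a1 [^] p \<otimes> B [^] q \<otimes> a1 [^] r" unfolding w_def p_def q_def r_def ..
    have wj: "w j = a1 [^] (p + dA) \<otimes> B [^] (q + dB) \<otimes> a1 [^] (r + dC)"
    proof -
      have "min j t = p + dA" "min (j - t) l2 = q + dB" "j - t - l2 = r + dC"
        unfolding p_def q_def r_def dA_def dB_def dC_def using that by auto
      thus ?thesis unfolding w_def by simp
    qed
    have f1: "dA > 0 \<Longrightarrow> q = 0 \<and> r = 0" unfolding dA_def q_def r_def by auto
    have f2: "dB > 0 \<Longrightarrow> r = 0" unfolding dB_def r_def by auto
    have "w j = w i \<otimes> (a1 [^] dA \<otimes> B [^] dB \<otimes> a1 [^] dC)"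
    proof (cases "dA > 0")
      case True
      then have "q = 0" "r = 0" using f1 by auto
      then show ?thesis unfolding wi wj using a1 B
        by (simp add: nat_pow_mult[symmetric] m_assoc)
    next
      case A: False
      show ?thesis
      proof (cases "dB > 0")
        case True
        then have "r = 0" using f2 by auto
        then show ?thesis unfolding wi wj using a1 B A
          by (simp add: nat_pow_mult[symmetric] m_assoc)
      next
        case False
        then show ?thesis unfolding wi wj using a1 B A
          by (simp add: nat_pow_mult[symmetric] m_assoc)
      qed
    qed
    thus ?thesis unfolding dA_def dB_def dC_def .
  qed
  have neq: "w i \<noteq> w j" if "i < j" "j - i \<le> t" for i j
  proof
    assume eq: "w i = w j"
    define dA where "dA = min j t - min i t"
    define dB where "dB = min (j - t) l2 - min (i - t) l2"
    define dC where "dC = j - t - l2 - (i - t - l2)"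
    have sum: "dB + (dC + dA) = j - i" unfolding dA_def dB_def dC_def using that(1)
      by (cases "i \<le> t"; cases "j \<le> t"; cases "i \<le> t + l2"; cases "j \<le> t + l2") (simp_all add: min_def)
    have "w i = w i \<otimes> (a1 [^] dA \<otimes> B [^] dB \<otimes> a1 [^] dC)"
      using eq decomp[of i j] that unfolding dA_def dB_def dC_def by simp
    hence "a1 [^] dA \<otimes> B [^] dB \<otimes> a1 [^] dC = \<one>" using wc a1 B by simp
    hence "a1 [^] dA \<otimes> (B [^] dB \<otimes> a1 [^] dC) = \<one>" using a1 B by (simp add: m_assoc)
    hence "(B [^] dB \<otimes> a1 [^] dC) \<otimes> a1 [^] dA = \<one>" using a1 B swap_one by simp
    hence "B [^] dB \<otimes> a1 [^] (dC + dA) = \<one>" using a1 B by (simp add: m_assoc nat_pow_mult)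
    moreover have "1 \<le> dB + (dC + dA)" "dB + (dC + dA) \<le> t" using sum that by auto
    ultimately show False using good by blast
  qed
  have stepk: "w (Suc k) = w k \<otimes> (if t < Suc k \<and> Suc k \<le> t + l2 then B else a1)" for k
  proof -
    have d: "w (Suc k) = w k \<otimes> (a1 [^] (min (Suc k) t - min k t) \<otimes> B [^] (min (Suc k - t) l2 - min (k - t) l2)
       \<otimes> a1 [^] (Suc k - t - l2 - (k - t - l2)))" using decomp[of k "Suc k"] by simp
    consider "k < t" | "t \<le> k" "k < t + l2" | "t + l2 \<le> k" by linarith
    thus ?thesis
    proof cases
      case 1
      hence "min (Suc k) t - min k t = 1" "min (Suc k - t) l2 - min (k - t) l2 = 0"
        "Suc k - t - l2 - (k - t - l2) = 0" by auto
      thus ?thesis using d 1 a1 B by simp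
    next
      case 2
      hence "min (Suc k) t - min k t = 0" "min (Suc k - t) l2 - min (k - t) l2 = 1"
        "Suc k - t - l2 - (k - t - l2) = 0" by auto
      thus ?thesis using d 2 a1 B by simp
    next
      case 3
      hence "min (Suc k) t - min k t = 0" "min (Suc k - t) l2 - min (k - t) l2 = 0"
        "Suc k - t - l2 - (k - t - l2) = 1" by auto
      thus ?thesis using d 3 a1 B by simp
    qed
  qed
  have stepi: "w i = w (i - 1) \<otimes> (if t < i \<and> i \<le> t + l2 then B else a1)" if "1 \<le> i" for i
    using stepk[of "i - 1"] that by simp
  define x where "x i = (if t < i \<and> i \<le> t + l2 then a2 else a1)" for i :: nat
  define eps where "eps i = (if t < i \<and> i \<le> t + l2 then sg else True)" for i :: nat
  have xe: "(if eps i then x i else inv (x i)) = (if t < i \<and> i \<le> t + l2 then B else a1)" for i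
    unfolding x_def eps_def B_def by auto
  have L: "t + l2 + (l1 - t) = l1 + l2" using assms by simp
  have ups: "[1..<l1 + l2 + 1] = [1..<t+1] @ [t+1..<t+l2+1] @ [t+l2+1..<l1 + l2 + 1]"
  proof -
    have e1: "l1 + l2 + 1 = (t + 1) + (l1 + l2 - t)" using L by simp
    have e2: "l1 + l2 + 1 = (t + l2 + 1) + (l1 - t)" using L by simp
    have e3: "t + l2 + 1 = (t + 1) + l2" by simp
    have "[1..<l1 + l2 + 1] = [1..<t+1] @ [t+1..<l1 + l2 + 1]"
      unfolding e1 by (rule upt_add_eq_append) simp
    moreover have "[t+1..<l1 + l2 + 1] = [t+1..<t+l2+1] @ [t+l2+1..<l1 + l2 + 1]"
      unfolding e2 by (rule upt_add_eq_append) simp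
    ultimately show ?thesis by simp
  qed
  have m1: "map x [1..<t+1] = replicate t a1"
  proof -
    have "map x [1..<t+1] = map (\<lambda>_. a1) [1..<t+1]" by (rule map_cong) (auto simp: x_def)
    thus ?thesis by (simp add: map_replicate_const)
  qed
  have m2: "map x [t+1..<t+l2+1] = replicate l2 a2"
  proof -
    have "map x [t+1..<t+l2+1] = map (\<lambda>_. a2) [t+1..<t+l2+1]" by (rule map_cong) (auto simp: x_def)
    thus ?thesis by (simp add: map_replicate_const)
  qed
  have m3: "map x [t+l2+1..<l1 + l2 + 1] = replicate (l1 - t) a1"
  proof -
    have "map x [t+l2+1..<l1 + l2 + 1] = map (\<lambda>_. a1) [t+l2+1..<l1 + l2 + 1]" by (rule map_cong) (auto simp: x_def)
    moreover have "length [t+l2+1..<l1 + l2 + 1] = l1 - t" by (simp only: length_upt)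
    ultimately show ?thesis by (metis map_replicate_const)
  qed
  have ms: "mset (map x [1..<l1 + l2 + 1]) = replicate_mset l1 a1 + replicate_mset l2 a2"
  proof -
    have "mset (map x [1..<l1 + l2 + 1]) = replicate_mset t a1 + replicate_mset l2 a2 + replicate_mset (l1 - t) a1"
      unfolding ups map_append mset_append m1 m2 m3 mset_replicate by (simp only: add.assoc)
    also have "\<dots> = replicate_mset (t + (l1 - t)) a1 + replicate_mset l2 a2"
      by (simp add: replicate_mset_plus_aux add_ac)
    also have "t + (l1 - t) = l1" using assms by simp
    finally show ?thesis .
  qed
  have real: "realization G (replicate_mset l1 a1 + replicate_mset l2 a2) w"
    unfolding realization_def
  proof (intro conjI exI)
    show "w 0 \<in> carrier G" by (rule wc)
    show "mset (map x [1..<size (replicate_mset l1 a1 + replicate_mset l2 a2) + 1]) = replicate_mset l1 a1 + replicate_mset l2 a2"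
      using ms by simp
    show "\<forall>i\<in>{1..size (replicate_mset l1 a1 + replicate_mset l2 a2)}. w i = w (i - 1) \<otimes> (if eps i then x i else inv (x i))"
      using stepi xe by simp
  qed
  have pa: "\<forall>i\<in>{1..t}. w i = w (i - 1) \<otimes> a1" using stepi by auto
  have pb: "\<forall>i\<in>{l1 + l2 - (t - 1)..l1 + l2}. w i = w (i - 1) \<otimes> a1"
  proof
    fix i assume "i \<in> {l1 + l2 - (t - 1)..l1 + l2}"
    hence "l1 + l2 - (t - 1) \<le> i" by simp
    hence "1 \<le> i" "\<not> (t < i \<and> i \<le> t + l2)" using assms(2,8) by linarith+
    thus "w i = w (i - 1) \<otimes> a1" using stepi[of i] by presburger
  qed
  have pc: "\<forall>i\<in>{0..l1 + l2}. \<forall>j\<in>{0..l1 + l2}.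
              1 \<le> \<bar>int i - int j\<bar> \<and> \<bar>int i - int j\<bar> \<le> int t \<longrightarrow> w i \<noteq> w j"
  proof (intro ballI impI)
    fix i j assume h: "1 \<le> \<bar>int i - int j\<bar> \<and> \<bar>int i - int j\<bar> \<le> int t"
    show "w i \<noteq> w j"
    proof (cases "i < j")
      case True
      hence "j - i \<le> t" using h by linarith
      thus ?thesis using neq[of i j] True by blast
    next
      case False hence "j < i" using h by linarith
      moreover have "i - j \<le> t" using h \<open>j < i\<close> by linarith
      ultimately show ?thesis using neq[of j i] by metis
    qed
  qed
  show ?thesis using real pa pb pc by blast
qed


theorem proposition3p2:
  fixes G :: "('a, 'b) monoid_scheme" and t l1 l2 :: nat and a1 a2 :: 'a
  assumes "group G" and "finite (carrier G)"
    and "t \<ge> 1"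
    and "\<forall>p::nat. Factorial_Ring.prime p \<and> p dvd order G \<longrightarrow> p > t * (2 * t + 1)"
    and "a1 \<in> carrier G" and "a2 \<in> carrier G"
    and "a1 \<noteq> \<one>\<^bsub>G\<^esub>" and "a2 \<noteq> \<one>\<^bsub>G\<^esub>"
    and "l1 \<ge> 2 * t"
  shows "\<exists>w. realization G (replicate_mset l1 a1 + replicate_mset l2 a2) w \<and>
           (\<forall>i\<in>{1..t}. w i = w (i - 1) \<otimes>\<^bsub>G\<^esub> a1) \<and>
           (\<forall>i\<in>{l1 + l2 - (t - 1)..l1 + l2}. w i = w (i - 1) \<otimes>\<^bsub>G\<^esub> a1) \<and>
           (\<forall>i\<in>{0..l1 + l2}. \<forall>j\<in>{0..l1 + l2}.
              1 \<le> \<bar>int i - int j\<bar> \<and> \<bar>int i - int j\<bar> \<le> int t \<longrightarrow> w i \<noteq> w j)"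
  using group.main_aux[OF assms(1) assms(2-)] .

end
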